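(* If $R$ is a finite commutative ring, then the set of all free cyclic submodules of $R^2$ equals the projective line $\mathbb{P}(R)$.
   Context: $R^2$ is the free $R$-module of pairs; $R(a,b)=\{(\alpha a,\alpha b):\alpha\in R\}$ is free if $r(a,b)=(0,0)$ implies $r=0$. A pair $(a,b)$ is admissible if there exist $c,d\in R$ with $\begin{pmatrix}a&b\\c&d\end{pmatrix}\in GL_2(R)$. The projective line is $\mathbb{P}(R)=\{R(a,b): (a,b)\in R^2 \text{ admissible}\}$, equivalently the orbit of $R(1,0)$ under the right action of $GL_2(R)$. *)

theory Defs
  imports Main
begin

definition cyclic_submodule :: "'a::comm_ring_1 \<times> 'a \<Rightarrow> ('a \<times> 'a) set" where
  "cyclic_submodule p = {(\<alpha> * fst p, \<alpha> * snd p) | \<alpha>. True}"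

definition free_pair :: "'a::comm_ring_1 \<times> 'a \<Rightarrow> bool" where
  "free_pair p \<longleftrightarrow> (\<forall>r. (r * fst p, r * snd p) = (0, 0) \<longrightarrow> r = 0)"

definition in_GL2 :: "'a::comm_ring_1 \<Rightarrow> 'a \<Rightarrow> 'a \<Rightarrow> 'a \<Rightarrow> bool" where
  "in_GL2 a b c d \<longleftrightarrow> (\<exists>a' b' c' d'.
      a * a' + b * c' = 1 \<and> a * b' + b * d' = 0 \<and> c * a' + d * c' = 0 \<and> c * b' + d * d' = 1 \<and>
      a' * a + b' * c = 1 \<and> a' * b + b' * d = 0 \<and> c' * a + d' * c = 0 \<and> c' * b + d' * d = 1)"

definition admissible :: "'a::comm_ring_1 \<times> 'a \<Rightarrow> bool" where
  "admissible p \<longleftrightarrow> (\<exists>c d. in_GL2 (fst p) (snd p) c d)"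

definition free_cyclic_submodules :: "('a::comm_ring_1 \<times> 'a) set set" where
  "free_cyclic_submodules = {cyclic_submodule p | p. free_pair p}"

definition projective_line :: "('a::comm_ring_1 \<times> 'a) set set" where
  "projective_line = {cyclic_submodule p | p. admissible p}"

end

theory Submission
  imports Defs
begin

lemma pow_period:
  fixes x :: "'a::monoid_mult"
  assumes "x ^ a = x ^ (a + p)"
  shows "x ^ (a + k + t * p) = x ^ (a + k)"
proof (induction t)
  case 0 then show ?case by simp
next
  case (Suc t)
  have "x ^ (a + k + Suc t * p) = x ^ (a + p) * x ^ (k + t * p)"
    by (simp add: power_add[symmetric] algebra_simps)
  also have "\<dots> = x ^ a * x ^ (k + t * p)" using assms by simp
  also have "\<dots> = x ^ (a + k + t * p)" by (simp add: power_add[symmetric] algebra_simps)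
  finally show ?case using Suc by simp
qed

lemma idem_power:
  fixes x :: "'a::{monoid_mult, finite}"
  shows "\<exists>n\<ge>1. x ^ n * x ^ n = x ^ n"
proof -
  have "\<not> inj_on (\<lambda>k. x ^ (k+1)) {..card (UNIV::'a set)}"
  proof
    assume "inj_on (\<lambda>k. x ^ (k+1)) {..card (UNIV::'a set)}"
    then have "card ((\<lambda>k. x ^ (k+1)) ` {..card (UNIV::'a set)}) = Suc (card (UNIV::'a set))"
      by (simp add: card_image)
    moreover have "card ((\<lambda>k. x ^ (k+1)) ` {..card (UNIV::'a set)}) \<le> card (UNIV::'a set)"
      by (rule card_mono) auto
    ultimately show False by simp
  qed
  then obtain i j where ij: "i \<noteq> j" "x ^ (i+1) = x ^ (j+1)"
    unfolding inj_on_def by blast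
  then obtain a p where ap: "x ^ a = x ^ (a + p)" "a \<ge> 1" "p \<ge> 1"
  proof (cases "i < j")
    case True then show ?thesis using ij that[of "i+1" "j - i"] by auto
  next
    case False then show ?thesis using ij that[of "j+1" "i - j"] by auto
  qed
  define n where "n = a * p"
  have n1: "n \<ge> a" using ap by (simp add: n_def)
  have "x ^ (a + (n - a) + a * p) = x ^ (a + (n - a))"
    by (rule pow_period[OF ap(1)])
  moreover have "a + (n - a) = n" using n1 by simp
  moreover have "a * p = n" by (simp add: n_def)
  ultimately have "x ^ (n + n) = x ^ n" by simp
  then have "x ^ n * x ^ n = x ^ n" by (simp only: power_add[symmetric])
  moreover have "n \<ge> 1" using n1 ap(2) by linarith
  ultimately show ?thesis by blast
qed

lemma kill_step:
  fixes r x :: "'a::comm_ring_1"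
  shows "r \<noteq> 0 \<Longrightarrow> r * x ^ n = 0 \<Longrightarrow> \<exists>i. r * x ^ i \<noteq> 0 \<and> r * x ^ (Suc i) = 0"
proof (induction n)
  case 0 then show ?case by simp
next
  case (Suc n)
  then show ?case by (cases "r * x ^ n = 0") auto
qed

lemma free_unimod:
  fixes a b :: "'a::{comm_ring_1, finite}"
  assumes fr: "\<forall>r. r * a = 0 \<and> r * b = 0 \<longrightarrow> r = 0"
  shows "\<exists>u v. a * u + b * v = 1"
proof -
  obtain n where n: "n \<ge> 1" "a ^ n * a ^ n = a ^ n" using idem_power by blast
  obtain m where m: "m \<ge> 1" "b ^ m * b ^ m = b ^ m" using idem_power by blast
  define e where "e = a ^ n"
  define f where "f = b ^ m"
  define g where "g = (1 - e) * (1 - f)"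
  have ee: "e * e = e" using n by (simp add: e_def)
  have ff: "f * f = f" using m by (simp add: f_def)
  have g0: "g = 0"
  proof (rule ccontr)
    assume "g \<noteq> 0"
    have ge: "g * e = 0"
    proof -
      have "g * e = (1 - f) * (e - e * e)" by (simp add: g_def algebra_simps)
      then show ?thesis using ee by simp
    qed
    have gf: "g * f = 0"
    proof -
      have "g * f = (1 - e) * (f - f * f)" by (simp add: g_def algebra_simps)
      then show ?thesis using ff by simp
    qed
    have "g * a ^ n = 0" using ge by (simp add: e_def)
    then obtain i where i: "g * a ^ i \<noteq> 0" "g * a ^ Suc i = 0"
      using kill_step[OF \<open>g \<noteq> 0\<close>] by blast
    have "(g * a ^ i) * b ^ m = 0"
    proof -
      have "(g * a ^ i) * b ^ m = a ^ i * (g * f)" by (simp add: f_def mult.commute mult.left_commute)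
      then show ?thesis using gf by simp
    qed
    then obtain j where j: "g * a ^ i * b ^ j \<noteq> 0" "g * a ^ i * b ^ Suc j = 0"
      using kill_step[OF i(1)] by blast
    have "(g * a ^ i * b ^ j) * a = 0"
    proof -
      have "(g * a ^ i * b ^ j) * a = b ^ j * (g * a ^ Suc i)" by (simp add: ac_simps)
      also have "\<dots> = 0" using i(2) by simp
      finally show ?thesis .
    qed
    moreover have "(g * a ^ i * b ^ j) * b = 0"
      using j(2) by (simp add: algebra_simps)
    ultimately show False using fr j(1) by blast
  qed
  have h: "1 = e + f * (1 - e)" using g0 unfolding g_def by (simp add: algebra_simps)
  have eu: "e = a * a ^ (n - 1)" using n unfolding e_def
    by (cases n) auto
  have fw: "f = b * b ^ (m - 1)" using m unfolding f_def
    by (cases m) auto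
  have "a * a ^ (n - 1) + b * (b ^ (m - 1) * (1 - e)) = 1"
    using h unfolding eu fw by (simp add: mult.assoc)
  then show ?thesis by blast
qed

lemma free_iff_adm:
  fixes p :: "'a::{comm_ring_1, finite} \<times> 'a"
  shows "free_pair p \<longleftrightarrow> admissible p"
proof
  assume h: "free_pair p"
  have fr: "\<forall>r. r * fst p = 0 \<and> r * snd p = 0 \<longrightarrow> r = 0"
  proof (intro allI impI)
    fix r assume "r * fst p = 0 \<and> r * snd p = 0"
    then have "(r * fst p, r * snd p) = (0, 0)" by (simp only: prod.inject)
    then show "r = 0" using h unfolding free_pair_def by blast
  qed
  have "\<exists>u v. fst p * u + snd p * v = 1" by (rule free_unimod[OF fr])
  then obtain u v where uv: "fst p * u + snd p * v = 1" by blast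
  obtain x y where p: "p = (x, y)" by fastforce
  have uv1: "x * u + y * v = 1" using uv p by simp
  have uv2: "u * x + v * y = 1" using uv1 by (simp add: mult.commute)
  have uv3: "v * y + u * x = 1" using uv2 by (simp add: add.commute)
  have uv4: "y * v + x * u = 1" using uv1 by (simp add: add.commute)
  have "in_GL2 x y (- v) u"
    unfolding in_GL2_def
    apply (rule exI[of _ u], rule exI[of _ "- y"], rule exI[of _ v], rule exI[of _ x])
    apply (intro conjI)
    using uv1 uv2 uv3 uv4 by (simp_all add: mult.commute)
  then have "in_GL2 (fst p) (snd p) (- v) u" using p by simp
  then show "admissible p" by (auto simp: admissible_def)
next
  assume "admissible p"
  then obtain c d a' b' c' d' where h: "fst p * a' + snd p * c' = 1"
    unfolding admissible_def in_GL2_def by blast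
  show "free_pair p" unfolding free_pair_def
  proof (intro allI impI)
    fix r assume "(r * fst p, r * snd p) = (0, 0)"
    then have "r * (fst p * a' + snd p * c') = 0" by (simp add: algebra_simps)
    then show "r = 0" using h by simp
  qed
qed

theorem mainTheorem14:
  shows "(free_cyclic_submodules :: ('a::{comm_ring_1, finite} \<times> 'a) set set) = projective_line"
  unfolding free_cyclic_submodules_def projective_line_def by (simp only: free_iff_adm)

end
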